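(* Let $G=(V,E,w)$ be an undirected weighted graph such that $w(e)<1$ for every $e\in E$ and every vertex has at most $3$ neighbors. Then $\chi_w(G)\le 2$.
   Context: An undirected weighted graph $G=(V,E,w)$ with $w:E\to[0,1]$ is regarded as a weighted digraph in which each edge $\{u,v\}$ gives arcs $(u,v)$ and $(v,u)$ of weight $w(\{u,v\})$. A $k$-coloring is a map $c:V\to\{1,\dots,k\}$, and $c[v]$ denotes the set of vertices with color $c(v)$. For $S\subseteq V$, $d^-_S(v)=\sum_{u\in S,(u,v)\in E}w(u,v)$. A weighted improper $k$-coloring is a $k$-coloring with $d^-_{c[v]}(v)<1$ for every $v$, and $\chi_w(G)$ is the minimum $k$ for which one exists. *)

theory Defs
  imports Complex_Main
begin

definition weighted_graph :: "'a set \<Rightarrow> 'a set set \<Rightarrow> ('a set \<Rightarrow> real) \<Rightarrow> bool" where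
  "weighted_graph V E w \<longleftrightarrow> finite V \<and>
     (\<forall>e\<in>E. \<exists>u v. e = {u, v} \<and> u \<noteq> v \<and> u \<in> V \<and> v \<in> V) \<and>
     (\<forall>e\<in>E. 0 \<le> w e \<and> w e \<le> 1)"

definition nbrs :: "'a set set \<Rightarrow> 'a \<Rightarrow> 'a set" where
  "nbrs E v = {u. {u, v} \<in> E}"

definition in_deg :: "'a set set \<Rightarrow> ('a set \<Rightarrow> real) \<Rightarrow> 'a set \<Rightarrow> 'a \<Rightarrow> real" where
  "in_deg E w S v = (\<Sum>u\<in>{u\<in>S. {u, v} \<in> E}. w {u, v})"

definition weighted_improper_coloring ::
  "'a set \<Rightarrow> 'a set set \<Rightarrow> ('a set \<Rightarrow> real) \<Rightarrow> nat \<Rightarrow> ('a \<Rightarrow> nat) \<Rightarrow> bool" where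
  "weighted_improper_coloring V E w k c \<longleftrightarrow>
     (\<forall>v\<in>V. c v \<in> {1..k}) \<and>
     (\<forall>v\<in>V. in_deg E w {u\<in>V. c u = c v} v < 1)"

definition chi_w :: "'a set \<Rightarrow> 'a set set \<Rightarrow> ('a set \<Rightarrow> real) \<Rightarrow> nat" where
  "chi_w V E w = (LEAST k. \<exists>c. weighted_improper_coloring V E w k c)"

end

theory Submission
  imports Defs
begin

definition mono2 :: "'a set \<Rightarrow> 'a set set \<Rightarrow> 'a set \<Rightarrow> 'a set set" where
  "mono2 V E A = {e\<in>E. e \<subseteq> A \<or> e \<subseteq> V - A}"

lemma E_fin:
  assumes "weighted_graph V E w" shows "finite E" "E \<subseteq> Pow V"
proof -
  show "E \<subseteq> Pow V" using assms unfolding weighted_graph_def by fastforce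
  then show "finite E" using assms unfolding weighted_graph_def
    by (meson finite_Pow_iff finite_subset)
qed

lemma nbrs_sub:
  assumes "weighted_graph V E w" shows "nbrs E v \<subseteq> V - {v}"
proof
  fix u assume "u \<in> nbrs E v"
  then have "{u,v} \<in> E" by (simp add: nbrs_def)
  then obtain a b where "{u,v} = {a,b}" "a \<noteq> b" "a \<in> V" "b \<in> V"
    using assms unfolding weighted_graph_def by blast
  then show "u \<in> V - {v}" by (metis DiffI doubleton_eq_iff singletonD)
qed

lemma key:
  assumes wg: "weighted_graph V E w"
    and deg: "card (nbrs E v) \<le> 3"
    and AV: "A \<subseteq> V" and vA: "v \<in> A"
    and mn: "\<forall>B. B \<subseteq> V \<longrightarrow> card (mono2 V E A) \<le> card (mono2 V E B)"
  shows "card {u\<in>A. {u,v} \<in> E} \<le> 1"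
proof (rule ccontr)
  assume c: "\<not> ?thesis"
  define N where "N = nbrs E v"
  define B where "B = A - {v}"
  define Ev where "Ev = {e\<in>E. v \<in> e}"
  have finE: "finite E" and EP: "E \<subseteq> Pow V" using E_fin[OF wg] by auto
  have NV: "N \<subseteq> V - {v}" using nbrs_sub[OF wg] N_def by auto
  have finN: "finite N" using NV wg unfolding weighted_graph_def by (meson finite_Diff finite_subset)
  have SN: "{u\<in>A. {u,v} \<in> E} = N \<inter> A" unfolding N_def nbrs_def by auto
  have edge: "\<And>e. e \<in> Ev \<Longrightarrow> \<exists>u. e = {u,v} \<and> u \<in> N" 
  proof -
    fix e assume "e \<in> Ev"
    then have eE: "e \<in> E" "v \<in> e" unfolding Ev_def by auto
    then obtain a b where "e = {a,b}" using wg unfolding weighted_graph_def by blast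
    with eE show "\<exists>u. e = {u,v} \<and> u \<in> N" unfolding N_def nbrs_def
      by (metis insert_commute insert_iff mem_Collect_eq singletonD)
  qed
  have injv: "inj_on (\<lambda>u. {u,v}) X" for X by (rule inj_onI) (metis doubleton_eq_iff)
  have e1: "mono2 V E A \<inter> Ev = (\<lambda>u. {u,v}) ` (N \<inter> A)"
  proof
    show "mono2 V E A \<inter> Ev \<subseteq> (\<lambda>u. {u,v}) ` (N \<inter> A)"
    proof
      fix e assume e: "e \<in> mono2 V E A \<inter> Ev"
      then obtain u where u: "e = {u,v}" "u \<in> N" using edge by blast
      with e vA show "e \<in> (\<lambda>u. {u,v}) ` (N \<inter> A)" unfolding mono2_def by auto
    qed
    show "(\<lambda>u. {u,v}) ` (N \<inter> A) \<subseteq> mono2 V E A \<inter> Ev"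
      using vA unfolding mono2_def Ev_def N_def nbrs_def by auto
  qed
  have e2: "mono2 V E B \<inter> Ev = (\<lambda>u. {u,v}) ` (N - A)"
  proof
    show "mono2 V E B \<inter> Ev \<subseteq> (\<lambda>u. {u,v}) ` (N - A)"
    proof
      fix e assume e: "e \<in> mono2 V E B \<inter> Ev"
      then obtain u where u: "e = {u,v}" "u \<in> N" using edge by blast
      with NV have "u \<noteq> v" by auto
      with e u show "e \<in> (\<lambda>u. {u,v}) ` (N - A)" unfolding mono2_def B_def by auto
    qed
    show "(\<lambda>u. {u,v}) ` (N - A) \<subseteq> mono2 V E B \<inter> Ev"
      using NV AV vA unfolding mono2_def Ev_def N_def nbrs_def B_def by auto
  qed
  have e3: "mono2 V E A - Ev = mono2 V E B - Ev"
    unfolding mono2_def Ev_def B_def by auto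
  have finM: "finite (mono2 V E X)" for X using finE unfolding mono2_def by auto
  have cA: "card (mono2 V E A) = card (mono2 V E A \<inter> Ev) + card (mono2 V E A - Ev)"
    using card_Int_Diff finM by blast
  have cB: "card (mono2 V E B) = card (mono2 V E B \<inter> Ev) + card (mono2 V E B - Ev)"
    using card_Int_Diff finM by blast
  have c1: "card (mono2 V E A \<inter> Ev) = card (N \<inter> A)"
    using e1 card_image[OF injv] by simp
  have c2: "card (mono2 V E B \<inter> Ev) = card (N - A)"
    using e2 card_image[OF injv] by simp
  have "card N = card (N \<inter> A) + card (N - A)" using card_Int_Diff finN by blast
  moreover have "card N \<le> 3" using deg N_def by simp
  moreover have "card (N \<inter> A) \<ge> 2" using c SN by simp
  ultimately have "card (mono2 V E B) < card (mono2 V E A)"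
    using cA cB c1 c2 arg_cong[OF e3, of card] by linarith
  moreover have "B \<subseteq> V" using AV B_def by auto
  ultimately show False using mn leD by blast
qed

theorem lemma3p1:
  fixes V :: "'a set" and E :: "'a set set" and w :: "'a set \<Rightarrow> real"
  assumes "weighted_graph V E w"
    and "\<forall>e\<in>E. w e < 1"
    and "\<forall>v\<in>V. card (nbrs E v) \<le> 3"
  shows "chi_w V E w \<le> 2"
proof -
  obtain A where AV: "A \<subseteq> V" and mn: "\<forall>B. B \<subseteq> V \<longrightarrow> card (mono2 V E A) \<le> card (mono2 V E B)"
    using ex_has_least_nat[of "\<lambda>A. A \<subseteq> V" "{}" "\<lambda>A. card (mono2 V E A)"] by blast
  have EP: "E \<subseteq> Pow V" using E_fin[OF assms(1)] by auto
  have symm: "mono2 V E (V - A) = mono2 V E A" using EP AV unfolding mono2_def by auto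
  define c where "c = (\<lambda>x. if x \<in> A then 1 else (2::nat))"
  have small: "card {u\<in>V. c u = c v \<and> {u,v} \<in> E} \<le> 1" if vV: "v \<in> V" for v
  proof (cases "v \<in> A")
    case True
    have "{u\<in>V. c u = c v \<and> {u,v} \<in> E} = {u\<in>A. {u,v} \<in> E}"
      using True AV unfolding c_def by auto
    then show ?thesis using key[OF assms(1) _ AV True mn] assms(3) vV by simp
  next
    case False
    have "{u\<in>V. c u = c v \<and> {u,v} \<in> E} = {u\<in>V - A. {u,v} \<in> E}"
      using False AV unfolding c_def by auto
    moreover have "card {u\<in>V - A. {u,v} \<in> E} \<le> 1"
    proof (rule key[of V E w v "V - A"])
      show "weighted_graph V E w" by (rule assms(1))
      show "card (nbrs E v) \<le> 3" using assms(3) vV by blast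
      show "V - A \<subseteq> V" by blast
      show "v \<in> V - A" using vV False by blast
      show "\<forall>B. B \<subseteq> V \<longrightarrow> card (mono2 V E (V - A)) \<le> card (mono2 V E B)"
        unfolding symm by (rule mn)
    qed
    ultimately show ?thesis by simp
  qed
  have "weighted_improper_coloring V E w 2 c"
    unfolding weighted_improper_coloring_def
  proof (intro conjI ballI)
    fix v assume "v \<in> V" then show "c v \<in> {1..2}" unfolding c_def by auto
  next
    fix v assume vV: "v \<in> V"
    define S where "S = {u\<in>{u\<in>V. c u = c v}. {u,v} \<in> E}"
    have S: "S = {u\<in>V. c u = c v \<and> {u,v} \<in> E}" unfolding S_def by auto
    have cs: "card S \<le> 1" using small[OF vV] S by simp
    have fS: "finite S" using assms(1) unfolding S_def weighted_graph_def by auto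
    have "in_deg E w {u\<in>V. c u = c v} v = (\<Sum>u\<in>S. w {u,v})" unfolding in_deg_def S_def by simp
    also have "\<dots> < 1"
    proof (cases "S = {}")
      case True then show ?thesis by simp
    next
      case False
      then obtain u where "S = {u}" using cs fS
        by (metis card_0_eq card_1_singletonE le_neq_implies_less less_one)
      moreover have "{u,v} \<in> E" using \<open>S = {u}\<close> unfolding S_def by auto
      ultimately show ?thesis using assms(2) by simp
    qed
    finally show "in_deg E w {u\<in>V. c u = c v} v < 1" .
  qed
  then show ?thesis unfolding chi_w_def by (metis (mono_tags, lifting) Least_le)
qed

end
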